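(* Let $M$ be a magma satisfying $(xy)z = xz$ and $x(yz) = xx$ for all $x,y,z\in M$. Then $M$ satisfies $xy = xz$ and $(xy)z = xy$ for all $x,y,z\in M$ if and only if $M$ avoids the magma $D$ on $\{0,1,2,3\}$ with Cayley table \[ \begin{array}{c|cccc} D & 0 & 1 & 2 & 3 \\ \hline 0 & 0 & 2 & 0 & 0 \\ 1 & 3 & 3 & 3 & 3 \\ 2 & 0 & 2 & 0 & 0 \\ 3 & 3 & 3 & 3 & 3 \end{array}. \]
   Context: A magma is a nonempty set with a binary operation, written by juxtaposition. A magma $M$ avoids a magma $F$ if no submagma of $M$ is isomorphic to $F$. In the Cayley table, the entry in row $i$, column $j$ is $i\cdot j$. *)

theory Defs
  imports Main
begin

definition magma :: "'a set \<Rightarrow> ('a \<Rightarrow> 'a \<Rightarrow> 'a) \<Rightarrow> bool" where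
  "magma A f \<longleftrightarrow> A \<noteq> {} \<and> (\<forall>x\<in>A. \<forall>y\<in>A. f x y \<in> A)"

definition submagma :: "'a set \<Rightarrow> ('a \<Rightarrow> 'a \<Rightarrow> 'a) \<Rightarrow> 'a set \<Rightarrow> bool" where
  "submagma S f A \<longleftrightarrow> S \<subseteq> A \<and> magma S f"

definition magma_iso ::
  "('b \<Rightarrow> 'a) \<Rightarrow> 'b set \<Rightarrow> ('b \<Rightarrow> 'b \<Rightarrow> 'b) \<Rightarrow> 'a set \<Rightarrow> ('a \<Rightarrow> 'a \<Rightarrow> 'a) \<Rightarrow> bool" where
  "magma_iso h B g A f \<longleftrightarrow> bij_betw h B A \<and> (\<forall>x\<in>B. \<forall>y\<in>B. h (g x y) = f (h x) (h y))"

definition avoids ::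
  "'a set \<Rightarrow> ('a \<Rightarrow> 'a \<Rightarrow> 'a) \<Rightarrow> 'b set \<Rightarrow> ('b \<Rightarrow> 'b \<Rightarrow> 'b) \<Rightarrow> bool" where
  "avoids A f B g \<longleftrightarrow> \<not> (\<exists>S. submagma S f A \<and> (\<exists>h. magma_iso h B g S f))"

definition D_op :: "nat \<Rightarrow> nat \<Rightarrow> nat" where
  "D_op i j = (if i = 1 \<or> i = 3 then 3 else (if j = 1 then 2 else 0))"

definition D_carrier :: "nat set" where
  "D_carrier = {0, 1, 2, 3}"

end

theory Submission
  imports Defs
begin

lemma D_fail: "magma_iso h D_carrier D_op S f \<Longrightarrow> \<forall>x\<in>S. \<forall>y\<in>S. \<forall>z\<in>S. f x y = f x z \<Longrightarrow> False"
proof -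
  assume h: "magma_iso h D_carrier D_op S f" and e: "\<forall>x\<in>S. \<forall>y\<in>S. \<forall>z\<in>S. f x y = f x z"
  have b: "bij_betw h D_carrier S" and hm: "\<forall>x\<in>D_carrier. \<forall>y\<in>D_carrier. h (D_op x y) = f (h x) (h y)"
    using h unfolding magma_iso_def by auto
  have c: "(0::nat) \<in> D_carrier" "(1::nat) \<in> D_carrier" "(2::nat) \<in> D_carrier"
    unfolding D_carrier_def by simp_all
  have m: "h 0 \<in> S" "h 1 \<in> S" using b c unfolding bij_betw_def by auto
  have d: "D_op 0 1 = 2" "D_op 0 0 = 0" unfolding D_op_def by simp_all
  have "h 2 = f (h 0) (h 1)" using hm c d by metis
  also have "\<dots> = f (h 0) (h 0)" using e m by blast
  also have "\<dots> = h 0" using hm c d by metis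
  finally have "h 2 = h 0" .
  moreover have "inj_on h D_carrier" using b unfolding bij_betw_def by blast
  ultimately show False using c unfolding inj_on_def by (metis numeral_eq_iff semiring_norm(86) zero_neq_numeral)
qed

theorem mainTheorem14:
  fixes M :: "'a set" and mult :: "'a \<Rightarrow> 'a \<Rightarrow> 'a"
  assumes "magma M mult"
    and "\<forall>x\<in>M. \<forall>y\<in>M. \<forall>z\<in>M. mult (mult x y) z = mult x z"
    and "\<forall>x\<in>M. \<forall>y\<in>M. \<forall>z\<in>M. mult x (mult y z) = mult x x"
  shows "((\<forall>x\<in>M. \<forall>y\<in>M. \<forall>z\<in>M. mult x y = mult x z)
          \<and> (\<forall>x\<in>M. \<forall>y\<in>M. \<forall>z\<in>M. mult (mult x y) z = mult x y))
         \<longleftrightarrow> avoids M mult D_carrier D_op"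
proof
  assume L: "(\<forall>x\<in>M. \<forall>y\<in>M. \<forall>z\<in>M. mult x y = mult x z)
          \<and> (\<forall>x\<in>M. \<forall>y\<in>M. \<forall>z\<in>M. mult (mult x y) z = mult x y)"
  show "avoids M mult D_carrier D_op"
    unfolding avoids_def
  proof
    assume "\<exists>S. submagma S mult M \<and> (\<exists>h. magma_iso h D_carrier D_op S mult)"
    then obtain S h where S: "submagma S mult M" and h: "magma_iso h D_carrier D_op S mult" by blast
    have "S \<subseteq> M" using S unfolding submagma_def by blast
    then have "\<forall>x\<in>S. \<forall>y\<in>S. \<forall>z\<in>S. mult x y = mult x z" using L by blast
    then show False using D_fail h by blast
  qed
next
  assume av: "avoids M mult D_carrier D_op"
  have cl: "\<And>x y. x \<in> M \<Longrightarrow> y \<in> M \<Longrightarrow> mult x y \<in> M" using assms(1) unfolding magma_def by blast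
  have A1: "\<And>x y z. x \<in> M \<Longrightarrow> y \<in> M \<Longrightarrow> z \<in> M \<Longrightarrow> mult (mult x y) z = mult x z" using assms(2) by blast
  have A2: "\<And>x y z. x \<in> M \<Longrightarrow> y \<in> M \<Longrightarrow> z \<in> M \<Longrightarrow> mult x (mult y z) = mult x x" using assms(3) by blast
  have key: "mult a b = mult a a" if a: "a \<in> M" and b: "b \<in> M" for a b
  proof (rule ccontr)
    assume ne: "mult a b \<noteq> mult a a"
    define p where "p = mult a a"
    define q where "q = mult a b"
    define r where "r = mult b b"
    have pM: "p \<in> M" and qM: "q \<in> M" and rM: "r \<in> M" using cl a b p_def q_def r_def by auto
    have e1: "mult p y = mult a y" if "y \<in> M" for y using A1 a that p_def by blast
    have e2: "mult q y = mult a y" if "y \<in> M" for y using A1 a b that q_def by blast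
    have e3: "mult r y = mult b y" if "y \<in> M" for y using A1 b that r_def by blast
    have f1: "mult a p = p" "mult a q = p" "mult a r = p" using A2 a b p_def q_def r_def by auto
    have f2: "mult b p = r" "mult b q = r" "mult b r = r" using A2 a b p_def q_def r_def by auto
    have ab: "mult a b = q" "mult b b = r" "mult a a = p" using p_def q_def r_def by auto
    have pq: "p \<noteq> q" using ne p_def q_def by simp
    have bp: "b \<noteq> p" using f1(1) pq ab(1) by auto
    have bq: "b \<noteq> q" using f1(2) pq ab(1) by auto
    have br: "b \<noteq> r" using f1(3) pq ab(1,2) by auto
    have pr: "p \<noteq> r"
    proof
      assume "p = r"
      have "q = mult p b" using e1[OF b] ab by simp
      also have "\<dots> = mult r b" using \<open>p = r\<close> by simp
      also have "\<dots> = r" using e3[OF b] ab by simp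
      finally show False using pq \<open>p = r\<close> by simp
    qed
    have qr: "q \<noteq> r"
    proof
      assume "q = r"
      have "p = mult q q" using e2[OF qM] f1 by simp
      also have "\<dots> = mult r q" using \<open>q = r\<close> by simp
      also have "\<dots> = r" using e3[OF qM] f2 by simp
      finally show False using pr by simp
    qed
    define h where "h = (\<lambda>i::nat. if i = 0 then p else if i = 1 then b else if i = 2 then q else r)"
    define S where "S = {p, b, q, r}"
    have T: "mult p p = p" "mult p b = q" "mult p q = p" "mult p r = p"
      "mult q p = p" "mult q b = q" "mult q q = p" "mult q r = p"
      "mult b p = r" "mult b b = r" "mult b q = r" "mult b r = r"
      "mult r p = r" "mult r b = r" "mult r q = r" "mult r r = r"
      using e1[OF pM] e1[OF b] e1[OF qM] e1[OF rM]
        e2[OF pM] e2[OF b] e2[OF qM] e2[OF rM]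
        e3[OF pM] e3[OF b] e3[OF qM] e3[OF rM] f1 f2 ab by simp_all
    have sub: "submagma S mult M"
      unfolding submagma_def magma_def S_def
      using pM qM rM b by (simp add: T)
    have img: "h ` D_carrier = S" unfolding h_def S_def D_carrier_def by auto
    have inj: "inj_on h D_carrier" unfolding inj_on_def h_def D_carrier_def
      using pq bp bq br pr qr by auto
    have hom: "\<forall>x\<in>D_carrier. \<forall>y\<in>D_carrier. h (D_op x y) = mult (h x) (h y)"
      unfolding D_carrier_def h_def D_op_def by (simp add: T)
    have "magma_iso h D_carrier D_op S mult"
      unfolding magma_iso_def bij_betw_def using img inj hom by blast
    then show False using av sub unfolding avoids_def by blast
  qed
  have E: "mult x y = mult x z" if "x \<in> M" "y \<in> M" "z \<in> M" for x y z
    using key[OF that(1,2)] key[OF that(1,3)] by simp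
  show "(\<forall>x\<in>M. \<forall>y\<in>M. \<forall>z\<in>M. mult x y = mult x z)
          \<and> (\<forall>x\<in>M. \<forall>y\<in>M. \<forall>z\<in>M. mult (mult x y) z = mult x y)"
    using E A1 by (metis cl)
qed

end
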